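(* Let $\omega$ be a regular weight. If $T\in B(X)$ and $x\in X$ satisfy $\|e^{tT}x\|\le C_x\,\omega(t)$ for all $t\in\mathbb{R}$ and some constant $C_x>0$, then $\sigma_T(x)\subset i\mathbb{R}$.
   Context: $X$ is a complex Banach space, $B(X)$ the bounded linear operators on $X$. A weight is a continuous function $\omega:\mathbb{R}\to[1,\infty)$ with $\omega(t+s)\le\omega(t)\omega(s)$ for all $t,s$; it is regular if $\int_{\mathbb{R}}\frac{\log\omega(t)}{1+t^2}\,dt<\infty$. For $T\in B(X)$ and $x\in X$, $\rho_T(x)$ is the set of $\lambda\in\mathbb{C}$ having an open neighbourhood $U$ and an analytic $u:U\to X$ with $(zI-T)u(z)=x$ on $U$; the local spectrum is $\sigma_T(x)=\mathbb{C}\setminus\rho_T(x)$. *)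

theory Defs
  imports "HOL-Analysis.Analysis"
begin

class complex_banach = banach +
  fixes scaleC :: "complex \<Rightarrow> 'a \<Rightarrow> 'a"
  assumes scaleC_of_real: "scaleC (complex_of_real r) x = scaleR r x"
    and scaleC_add_right: "scaleC a (x + y) = scaleC a x + scaleC a y"
    and scaleC_add_left: "scaleC (a + b) x = scaleC a x + scaleC b x"
    and scaleC_scaleC: "scaleC a (scaleC b x) = scaleC (a * b) x"
    and scaleC_one: "scaleC 1 x = x"
    and norm_scaleC: "norm (scaleC a x) = cmod a * norm x"

definition complex_bounded_op :: "('a::complex_banach \<Rightarrow>\<^sub>L 'a) \<Rightarrow> bool" where
  "complex_bounded_op T \<longleftrightarrow> (\<forall>c x. blinfun_apply T (scaleC c x) = scaleC c (blinfun_apply T x))"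

definition weight :: "(real \<Rightarrow> real) \<Rightarrow> bool" where
  "weight \<omega> \<longleftrightarrow> continuous_on UNIV \<omega> \<and> (\<forall>t. 1 \<le> \<omega> t)
     \<and> (\<forall>t s. \<omega> (t + s) \<le> \<omega> t * \<omega> s)"

definition regular_weight :: "(real \<Rightarrow> real) \<Rightarrow> bool" where
  "regular_weight \<omega> \<longleftrightarrow> weight \<omega> \<and>
     (\<lambda>t. ln (\<omega> t) / (1 + t\<^sup>2)) integrable_on UNIV"

definition op_exp_apply :: "real \<Rightarrow> ('a::banach \<Rightarrow>\<^sub>L 'a) \<Rightarrow> 'a \<Rightarrow> 'a" where
  "op_exp_apply t T x = (\<Sum>n. (t ^ n / fact n) *\<^sub>R ((blinfun_apply T ^^ n) x))"

definition c_holomorphic_on :: "(complex \<Rightarrow> 'a::complex_banach) \<Rightarrow> complex set \<Rightarrow> bool" where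
  "c_holomorphic_on u U \<longleftrightarrow>
     (\<forall>z\<in>U. \<exists>d. ((\<lambda>h. scaleC (inverse h) (u (z + h) - u z)) \<longlongrightarrow> d) (at 0))"

definition local_resolvent :: "('a::complex_banach \<Rightarrow>\<^sub>L 'a) \<Rightarrow> 'a \<Rightarrow> complex set" where
  "local_resolvent T x = {l. \<exists>U u. open U \<and> l \<in> U \<and> c_holomorphic_on u U \<and>
       (\<forall>z\<in>U. scaleC z (u z) - blinfun_apply T (u z) = x)}"

definition local_spectrum :: "('a::complex_banach \<Rightarrow>\<^sub>L 'a) \<Rightarrow> 'a \<Rightarrow> complex set" where
  "local_spectrum T x = UNIV - local_resolvent T x"

end

theory Submission
  imports Defs
begin

typedef (overloaded) 'a op = "UNIV :: (('a::complex_banach \<Rightarrow>\<^sub>L 'a) \<times> real) set"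
  morphisms opr Opr by simp

setup_lifting type_definition_op

lemma l19: "max (norm (a + c)) \<bar>b + d\<bar> \<le> max (norm a) \<bar>b\<bar> + max (norm c) \<bar>d::real\<bar>"
  for a c :: "'x::real_normed_vector"
proof -
  have "norm (a + c) \<le> max (norm a) \<bar>b\<bar> + max (norm c) \<bar>d\<bar>"
    using norm_triangle_ineq[of a c] max.cobounded1[of "norm a" "\<bar>b\<bar>"] max.cobounded1[of "norm c" "\<bar>d\<bar>"] by linarith
  moreover have "\<bar>b + d\<bar> \<le> max (norm a) \<bar>b\<bar> + max (norm c) \<bar>d\<bar>"
    using abs_triangle_ineq[of b d] max.cobounded2[of "\<bar>b\<bar>" "norm a"] max.cobounded2[of "\<bar>d\<bar>" "norm c"] by linarith
  ultimately show ?thesis by simp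
qed
lemma l20: "max (norm (r *\<^sub>R a)) \<bar>r *\<^sub>R b\<bar> = \<bar>r\<bar> * max (norm a) \<bar>b::real\<bar>"
  for a :: "'x::real_normed_vector"
  by (simp add: abs_mult max_mult_distrib_left)
lemma l21: "max (norm (a o\<^sub>L c)) \<bar>b * d\<bar> \<le> max (norm a) \<bar>b\<bar> * max (norm c) \<bar>d::real\<bar>"
  for a c :: "'x::real_normed_vector \<Rightarrow>\<^sub>L 'x"
proof -
  have "norm (a o\<^sub>L c) \<le> max (norm a) \<bar>b\<bar> * max (norm c) \<bar>d\<bar>"
    by (rule order_trans[OF norm_blinfun_compose mult_mono]) auto
  moreover have "\<bar>b * d\<bar> \<le> max (norm a) \<bar>b\<bar> * max (norm c) \<bar>d\<bar>"
    unfolding abs_mult by (rule mult_mono) auto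
  ultimately show ?thesis by simp
qed

instantiation op :: (complex_banach) real_normed_algebra_1
begin
lift_definition zero_op :: "'a op" is "0" .
lift_definition one_op :: "'a op" is "(id_blinfun, 1)" .
lift_definition plus_op :: "'a op \<Rightarrow> 'a op \<Rightarrow> 'a op" is "(+)" .
lift_definition minus_op :: "'a op \<Rightarrow> 'a op \<Rightarrow> 'a op" is "(-)" .
lift_definition uminus_op :: "'a op \<Rightarrow> 'a op" is "uminus" .
lift_definition scaleR_op :: "real \<Rightarrow> 'a op \<Rightarrow> 'a op" is "scaleR" .
lift_definition times_op :: "'a op \<Rightarrow> 'a op \<Rightarrow> 'a op" is "\<lambda>p q. (fst p o\<^sub>L fst q, snd p * snd q)" .
lift_definition norm_op :: "'a op \<Rightarrow> real" is "\<lambda>p. max (norm (fst p)) \<bar>snd p\<bar>" .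
definition dist_op :: "'a op \<Rightarrow> 'a op \<Rightarrow> real" where "dist_op a b = norm (a - b)"
definition sgn_op :: "'a op \<Rightarrow> 'a op" where "sgn_op x = scaleR (inverse (norm x)) x"
definition uniformity_op :: "('a op \<times> 'a op) filter" where
  "uniformity_op = (INF e\<in>{0 <..}. principal {(x, y). dist x y < e})"
definition open_op :: "'a op set \<Rightarrow> bool" where
  "open_op S = (\<forall>x\<in>S. \<forall>\<^sub>F (x', y) in uniformity. x' = x \<longrightarrow> y \<in> S)"
instance
  apply intro_classes
  apply (simp_all add: dist_op_def sgn_op_def uniformity_op_def open_op_def)
  subgoal by transfer (auto simp: algebra_simps blinfun.bilinear_simps intro!: blinfun_eqI)
  subgoal by transfer (auto simp: algebra_simps blinfun.bilinear_simps intro!: blinfun_eqI)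
  subgoal by transfer (auto simp: algebra_simps blinfun.bilinear_simps intro!: blinfun_eqI)
  subgoal by transfer (auto simp: algebra_simps blinfun.bilinear_simps intro!: blinfun_eqI)
  subgoal by transfer (auto simp: algebra_simps blinfun.bilinear_simps intro!: blinfun_eqI)
  subgoal by transfer (auto simp: algebra_simps blinfun.bilinear_simps intro!: blinfun_eqI)
  subgoal by transfer (auto simp: algebra_simps blinfun.bilinear_simps intro!: blinfun_eqI)
  subgoal by transfer (auto simp: algebra_simps blinfun.bilinear_simps intro!: blinfun_eqI)
  subgoal by transfer (auto simp: algebra_simps blinfun.bilinear_simps intro!: blinfun_eqI)
  subgoal by transfer (auto simp: algebra_simps blinfun.bilinear_simps intro!: blinfun_eqI)
  subgoal by transfer (auto simp: algebra_simps blinfun.bilinear_simps intro!: blinfun_eqI)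
  subgoal by transfer (auto simp: algebra_simps blinfun.bilinear_simps intro!: blinfun_eqI)
  subgoal by transfer (auto simp: algebra_simps blinfun.bilinear_simps intro!: blinfun_eqI)
  subgoal by transfer (auto simp: algebra_simps blinfun.bilinear_simps intro!: blinfun_eqI)
  subgoal by transfer (auto simp: algebra_simps blinfun.bilinear_simps intro!: blinfun_eqI)
  subgoal by transfer (auto simp: algebra_simps blinfun.bilinear_simps intro!: blinfun_eqI)
  subgoal by transfer (simp add: zero_prod_def)
  subgoal by transfer (auto simp: zero_prod_def max_def split: if_splits)
  subgoal apply transfer apply (simp only: fst_add snd_add) by (rule l19)
  subgoal apply transfer apply (simp only: fst_scaleR snd_scaleR) by (rule l20)
  subgoal apply transfer apply (simp only: fst_conv snd_conv) by (rule l21)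
  subgoal apply transfer using norm_blinfun_id_le by (simp add: max_def)
  done
end

lemma norm_op_eq: "norm X = max (norm (fst (opr X))) \<bar>snd (opr X)\<bar>"
  by transfer simp

lemma opr_diff: "opr (X - Y) = opr X - opr Y" by transfer simp

instance op :: (complex_banach) banach
proof
  fix X :: "nat \<Rightarrow> 'a op" assume C: "Cauchy X"
  have "Cauchy (\<lambda>n. fst (opr (X n)))"
    unfolding Cauchy_iff
  proof (intro allI impI)
    fix e :: real assume "e > 0"
    then obtain M where M: "\<forall>m\<ge>M. \<forall>n\<ge>M. norm (X m - X n) < e" using C Cauchy_iff by blast
    then show "\<exists>M. \<forall>m\<ge>M. \<forall>n\<ge>M. norm (fst (opr (X m)) - fst (opr (X n))) < e"
    proof (intro exI[of _ M] allI impI)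
      fix m n assume mn: "m \<ge> M" "n \<ge> M"
      have "norm (fst (opr (X m)) - fst (opr (X n))) \<le> norm (X m - X n)"
        by (simp add: norm_op_eq opr_diff)
      then show "norm (fst (opr (X m)) - fst (opr (X n))) < e" using mn M by force
    qed
  qed
  then obtain L1 where L1: "(\<lambda>n. fst (opr (X n))) \<longlonglongrightarrow> L1"
    using Cauchy_convergent_iff convergent_def by blast
  have "Cauchy (\<lambda>n. snd (opr (X n)))"
    unfolding Cauchy_iff
  proof (intro allI impI)
    fix e :: real assume "e > 0"
    then obtain M where M: "\<forall>m\<ge>M. \<forall>n\<ge>M. norm (X m - X n) < e" using C Cauchy_iff by blast
    then show "\<exists>M. \<forall>m\<ge>M. \<forall>n\<ge>M. norm (snd (opr (X m)) - snd (opr (X n))) < e"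
    proof (intro exI[of _ M] allI impI)
      fix m n assume mn: "m \<ge> M" "n \<ge> M"
      have "norm (snd (opr (X m)) - snd (opr (X n))) \<le> norm (X m - X n)"
        by (simp add: norm_op_eq opr_diff)
      then show "norm (snd (opr (X m)) - snd (opr (X n))) < e" using mn M by force
    qed
  qed
  then obtain L2 where L2: "(\<lambda>n. snd (opr (X n))) \<longlonglongrightarrow> L2"
    using Cauchy_convergent_iff convergent_def by blast
  have "(\<lambda>n. max (norm (fst (opr (X n)) - L1)) \<bar>snd (opr (X n)) - L2\<bar>) \<longlonglongrightarrow> max 0 0"
    using tendsto_max[OF tendsto_norm_zero[OF LIM_zero[OF L1]] tendsto_rabs_zero[OF LIM_zero[OF L2]]] .
  moreover have "\<And>n. max (norm (fst (opr (X n)) - L1)) \<bar>snd (opr (X n)) - L2\<bar> = norm (X n - Opr (L1, L2))"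
    by (simp add: norm_op_eq opr_diff Opr_inverse)
  ultimately have "(\<lambda>n. norm (X n - Opr (L1, L2))) \<longlonglongrightarrow> 0" by simp
  then have "X \<longlonglongrightarrow> Opr (L1, L2)"
    by (rule LIM_zero_cancel[OF tendsto_norm_zero_cancel])
  then show "convergent X" unfolding convergent_def by blast
qed

lemma scaleC_zero_left [simp]: "scaleC 0 (x::'a::complex_banach) = 0"
  using scaleC_of_real[of 0 x] by simp

lemma scaleC_zero_right [simp]: "scaleC c (0::'a::complex_banach) = 0"
  using scaleC_add_right[of c 0 0] by simp

lemma scaleC_minus_right: "scaleC c (- x::'a::complex_banach) = - scaleC c x"
  using scaleC_add_right[of c x "-x"] by (simp add: eq_neg_iff_add_eq_0 add.commute)

lemma scaleC_diff_right: "scaleC c (x - y::'a::complex_banach) = scaleC c x - scaleC c y"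
  using scaleC_add_right[of c x "-y"] by (simp add: scaleC_minus_right)

lemma scaleC_minus_left: "scaleC (- c) (x::'a::complex_banach) = - scaleC c x"
  using scaleC_add_left[of c "-c" x] by (simp add: eq_neg_iff_add_eq_0 add.commute)

lemma scaleC_diff_left: "scaleC (c - d) (x::'a::complex_banach) = scaleC c x - scaleC d x"
  using scaleC_add_left[of c "-d" x] by (simp add: scaleC_minus_left)

lemma scaleC_scaleR_right: "scaleC c (r *\<^sub>R x::'a::complex_banach) = r *\<^sub>R scaleC c x"
  by (metis mult.commute scaleC_of_real scaleC_scaleC)

lemma scaleC_scaleR_left: "scaleC (r *\<^sub>R c) (x::'a::complex_banach) = r *\<^sub>R scaleC c x"
  by (metis scaleC_of_real scaleC_scaleC scaleR_conv_of_real)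

lemma bounded_linear_scaleC_right: "bounded_linear (scaleC c :: 'a::complex_banach \<Rightarrow> 'a)"
  by (rule bounded_linear_intro[where K="cmod c"])
     (auto simp: scaleC_add_right scaleC_scaleR_right norm_scaleC)

lemma bounded_linear_scaleC_left: "bounded_linear (\<lambda>c. scaleC c (x::'a::complex_banach))"
  by (rule bounded_linear_intro[where K="norm x"])
     (auto simp: scaleC_add_left scaleC_scaleR_left norm_scaleC mult.commute)

lemma scaleC_suminf_right:
  "summable f \<Longrightarrow> scaleC c (suminf f) = (\<Sum>n. scaleC c (f n :: 'a::complex_banach))"
  using bounded_linear.suminf[OF bounded_linear_scaleC_right] by metis

lemma scaleC_suminf_left:
  "summable f \<Longrightarrow> scaleC (suminf f) (x::'a::complex_banach) = (\<Sum>n. scaleC (f n) x)"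
  using bounded_linear.suminf[OF bounded_linear_scaleC_left] by metis

lemma continuous_on_scaleC_left:
  "continuous_on S g \<Longrightarrow> continuous_on S (\<lambda>h. scaleC (g h) (x::'a::complex_banach))"
  using linear_continuous_on[OF bounded_linear_scaleC_left, of UNIV x]
  by (rule continuous_on_compose2) auto

lemma summable_n_pow:
  fixes s :: real assumes "\<bar>s\<bar> < 1"
  shows "summable (\<lambda>k. real k * s^(k-1))"
proof -
  have "summable (\<lambda>n. diffs (\<lambda>_. 1::real) n * s ^ n)"
    by (rule termdiff_converges[where K=1]) (use assms in \<open>auto intro: summable_geometric\<close>)
  then have "summable (\<lambda>k. real (Suc k) * s^k)" by (simp add: diffs_def)
  then show ?thesis by (subst summable_Suc_iff[symmetric]) simp
qed

lemma powser_holo: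
  fixes a :: "nat \<Rightarrow> 'a::complex_banach"
  assumes bnd: "\<And>k. norm (a k) \<le> K * Q^k" and Q: "Q > 0"
  shows "c_holomorphic_on (\<lambda>z. \<Sum>k. scaleC ((z - z0)^k) (a k)) (ball z0 (1/Q))"
  unfolding c_holomorphic_on_def
proof
  fix z assume z: "z \<in> ball z0 (1/Q)"
  define c where "c = z - z0"
  have cQ: "cmod c < 1/Q" using z by (simp add: c_def dist_norm norm_minus_commute)
  define R where "R = (cmod c + 1/Q)/2"
  have R1: "cmod c < R" using cQ by (simp add: R_def)
  have R2: "R * Q < 1"
  proof -
    have "cmod c * Q < 1" using cQ Q by (simp add: field_simps)
    then show ?thesis using Q by (simp add: R_def field_simps)
  qed
  have R0: "0 \<le> R" using R1 norm_ge_zero[of c] by linarith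
  have K0: "0 \<le> K" by (metis bnd norm_ge_zero order_trans power_0 mult_1_right)
  have summ: "summable (\<lambda>k. scaleC (w^k) (a k))" if w: "cmod w \<le> R" for w
  proof (rule summable_comparison_test[where g="\<lambda>k. K * (R*Q)^k"])
    show "\<exists>N. \<forall>n\<ge>N. norm (scaleC (w^n) (a n)) \<le> K * (R*Q)^n"
    proof (intro exI[of _ 0] allI impI)
      fix n :: nat
      have "norm (scaleC (w^n) (a n)) = cmod w ^ n * norm (a n)" by (simp add: norm_scaleC norm_power)
      also have "\<dots> \<le> R^n * (K * Q^n)"
        by (intro mult_mono power_mono bnd w) (auto simp: R0)
      also have "\<dots> = K * (R*Q)^n" by (simp add: power_mult_distrib)
      finally show "norm (scaleC (w^n) (a n)) \<le> K * (R*Q)^n" .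
    qed
    show "summable (\<lambda>k. K * (R*Q)^k)"
      using R0 Q R2 by (intro summable_mult summable_geometric) auto
  qed
  define \<delta> where "\<delta> = R - cmod c"
  have \<delta>: "\<delta> > 0" using R1 by (simp add: \<delta>_def)
  define g where "g k h = (\<Sum>i<k. c^(k - Suc i) * (c+h)^i)" for k h
  have gdiff: "(c+h)^k - c^k = h * g k h" for k h
    using power_diff_sumr2[of "c+h" k c] by (simp add: g_def)
  have ch: "cmod (c+h) \<le> R" if "cmod h < \<delta>" for h
    using norm_triangle_ineq[of c h] that by (simp add: \<delta>_def)
  have gbnd: "cmod (g k h) \<le> real k * R^(k-1)" if h: "cmod h < \<delta>" for k h
  proof -
    have "cmod (g k h) \<le> (\<Sum>i<k. cmod (c^(k - Suc i) * (c+h)^i))" unfolding g_def by (rule norm_sum)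
    also have "\<dots> \<le> (\<Sum>i<k. R^(k-1))"
    proof (rule sum_mono)
      fix i assume i: "i \<in> {..<k}"
      then have "R^(k - Suc i) * R^i = R^(k-1)" by (simp add: power_add[symmetric])
      moreover have "cmod (c^(k - Suc i) * (c+h)^i) \<le> R^(k - Suc i) * R^i"
        unfolding norm_mult norm_power
        by (intro mult_mono power_mono) (use R1 ch[OF h] R0 in auto)
      ultimately show "cmod (c^(k - Suc i) * (c+h)^i) \<le> R^(k-1)" by simp
    qed
    also have "\<dots> = real k * R^(k-1)" by simp
    finally show ?thesis .
  qed
  define F where "F h = (\<Sum>k. scaleC (g k h) (a k))" for h
  have "uniform_limit (ball 0 \<delta>) (\<lambda>n h. \<Sum>k<n. scaleC (g k h) (a k)) F sequentially"
    unfolding F_def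
  proof (rule Weierstrass_m_test)
    show "norm (scaleC (g k h) (a k)) \<le> K * Q * (real k * (R*Q)^(k-1))" if "h \<in> ball 0 \<delta>" for k h
    proof -
      have h: "cmod h < \<delta>" using that by simp
      have "norm (scaleC (g k h) (a k)) = cmod (g k h) * norm (a k)" by (simp add: norm_scaleC)
      also have "\<dots> \<le> (real k * R^(k-1)) * (K * Q^k)"
        by (intro mult_mono gbnd h bnd) (auto simp: R0)
      also have "\<dots> = K * Q * (real k * (R*Q)^(k-1))"
        by (cases k) (simp_all add: power_mult_distrib)
      finally show ?thesis .
    qed
    show "summable (\<lambda>k. K * Q * (real k * (R*Q)^(k-1)))"
      using summable_n_pow[of "R*Q"] R0 Q R2 by (intro summable_mult) auto
  qed
  then have contF: "continuous_on (ball 0 \<delta>) F"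
    by (rule uniform_limit_theorem[rotated])
       (auto intro!: always_eventually continuous_on_sum continuous_on_scaleC_left continuous_intros
             simp: g_def)
  then have "isCont F 0"
    using \<delta> continuous_on_eq_continuous_at[of "ball 0 \<delta>" F] by auto
  then have limF: "(F \<longlongrightarrow> F 0) (at 0)" by (simp add: isCont_def)
  have quot: "scaleC (inverse h) ((\<Sum>k. scaleC ((z + h - z0)^k) (a k)) - (\<Sum>k. scaleC ((z - z0)^k) (a k))) = F h"
    if h0: "h \<noteq> 0" and h: "cmod h < \<delta>" for h
  proof -
    have e1: "z + h - z0 = c + h" "z - z0 = c" by (simp_all add: c_def)
    have s1: "summable (\<lambda>k. scaleC ((c+h)^k) (a k))" by (rule summ[OF ch[OF h]])
    have s2: "summable (\<lambda>k. scaleC (c^k) (a k))" by (rule summ) (use R1 in simp)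
    have "(\<Sum>k. scaleC ((c+h)^k) (a k)) - (\<Sum>k. scaleC (c^k) (a k))
          = (\<Sum>k. scaleC ((c+h)^k) (a k) - scaleC (c^k) (a k))"
      by (rule suminf_diff[OF s1 s2])
    also have "\<dots> = (\<Sum>k. scaleC (h * g k h) (a k))"
      by (simp add: scaleC_diff_left[symmetric] gdiff)
    finally have d: "(\<Sum>k. scaleC ((c+h)^k) (a k)) - (\<Sum>k. scaleC (c^k) (a k)) = (\<Sum>k. scaleC (h * g k h) (a k))" .
    have s3: "summable (\<lambda>k. scaleC (h * g k h) (a k))"
      using summable_diff[OF s1 s2] by (simp add: scaleC_diff_left[symmetric] gdiff)
    have "scaleC (inverse h) (\<Sum>k. scaleC (h * g k h) (a k)) = (\<Sum>k. scaleC (inverse h) (scaleC (h * g k h) (a k)))"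
      by (rule scaleC_suminf_right[OF s3])
    also have "\<dots> = F h"
    proof -
      have inv: "inverse h * (h * g k h) = g k h" for k using h0 by simp
      show ?thesis by (simp only: F_def scaleC_scaleC inv)
    qed
    finally have fin: "scaleC (inverse h) (\<Sum>k. scaleC (h * g k h) (a k)) = F h" .
    show ?thesis unfolding e1 d by (rule fin)
  qed
  show "\<exists>d. ((\<lambda>h. scaleC (inverse h) ((\<Sum>k. scaleC ((z + h - z0)^k) (a k)) - (\<Sum>k. scaleC ((z - z0)^k) (a k)))) \<longlongrightarrow> d) (at 0)"
  proof (intro exI)
    have ev: "eventually (\<lambda>h. scaleC (inverse h) ((\<Sum>k. scaleC ((z + h - z0)^k) (a k)) - (\<Sum>k. scaleC ((z - z0)^k) (a k))) = F h) (at 0)"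
      unfolding eventually_at
    proof (intro exI[of _ \<delta>] conjI ballI impI)
      fix h :: complex assume "h \<noteq> 0 \<and> dist h 0 < \<delta>"
      then show "scaleC (inverse h) ((\<Sum>k. scaleC ((z + h - z0)^k) (a k)) - (\<Sum>k. scaleC ((z - z0)^k) (a k))) = F h"
        using quot by simp
    qed (rule \<delta>)
    show "((\<lambda>h. scaleC (inverse h) ((\<Sum>k. scaleC ((z + h - z0)^k) (a k)) - (\<Sum>k. scaleC ((z - z0)^k) (a k)))) \<longlongrightarrow> F 0) (at 0)"
      by (subst tendsto_cong[OF ev]) (rule limF)
  qed
qed

lemma bl_funpow: "bounded_linear (blinfun_apply (B :: 'a::real_normed_vector \<Rightarrow>\<^sub>L 'a) ^^ n)"
proof (induction n)
  case 0 then show ?case by (simp add: id_def bounded_linear_ident)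
next
  case (Suc n)
  then show ?case
    using bounded_linear_compose[OF blinfun.bounded_linear_right Suc] by (simp add: comp_def)
qed

lemma norm_funpow: "norm ((blinfun_apply (P :: 'a::real_normed_vector \<Rightarrow>\<^sub>L 'a) ^^ n) y) \<le> norm P ^ n * norm y"
proof (induction n)
  case 0 then show ?case by simp
next
  case (Suc n)
  have "norm ((blinfun_apply P ^^ Suc n) y) \<le> norm P * norm ((blinfun_apply P ^^ n) y)"
    by (simp add: norm_blinfun)
  also have "\<dots> \<le> norm P * (norm P ^ n * norm y)"
    by (intro mult_left_mono Suc) auto
  finally show ?case by (simp add: mult.assoc)
qed

lemma core_resolvent:
  fixes T B P :: "'a::complex_banach \<Rightarrow>\<^sub>L 'a"
  assumes cT: "complex_bounded_op T"
    and AP: "\<And>y. scaleC l (P y) - T (P y) = y - B y"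
    and PB: "\<And>y. P (B y) = B (P y)"
    and orb: "\<And>n. norm ((blinfun_apply B ^^ n) x) \<le> K * r^n"
    and r0: "0 \<le> r" and r1: "r < 1"
  shows "l \<in> local_resolvent T x"
proof -
  define Bn where "Bn n = (blinfun_apply B ^^ n)" for n
  have Bn_lin: "bounded_linear (Bn n)" for n unfolding Bn_def by (rule bl_funpow)
  have Bn_add: "Bn n (Bn m y) = Bn (n + m) y" for n m y by (simp add: Bn_def funpow_add)
  define G where "G y = (\<Sum>m. Bn m y)" for y
  define g where "g k = (G ^^ k) x" for k
  have K0: "0 \<le> K" by (metis orb norm_ge_zero order_trans power_0 mult_1_right)
  have step: "summable (\<lambda>m. Bn m y) \<and> (\<forall>n. norm (Bn n (G y)) \<le> C / (1 - r) * r^n)"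
    if hy: "\<And>n. norm (Bn n y) \<le> C * r^n" and C0: "0 \<le> C" for y C
  proof
    show sy: "summable (\<lambda>m. Bn m y)"
      by (rule summable_comparison_test[where g="\<lambda>m. C * r^m"])
         (use hy r0 r1 in \<open>auto intro!: summable_mult summable_geometric\<close>)
    show "\<forall>n. norm (Bn n (G y)) \<le> C / (1 - r) * r^n"
    proof
      fix n
      have "Bn n (G y) = (\<Sum>m. Bn n (Bn m y))"
        unfolding G_def using bounded_linear.suminf[OF Bn_lin sy] by simp
      also have "\<dots> = (\<Sum>m. Bn (n + m) y)" by (simp add: Bn_add)
      finally have e: "Bn n (G y) = (\<Sum>m. Bn (n + m) y)" .
      have sg: "summable (\<lambda>m. C * r^n * r^m)"
        using r0 r1 by (intro summable_mult summable_geometric) auto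
      have b: "norm (Bn (n + m) y) \<le> C * r^n * r^m" for m
        using hy[of "n+m"] by (simp add: power_add mult.assoc)
      have sn: "summable (\<lambda>m. norm (Bn (n + m) y))"
        by (rule summable_comparison_test[OF _ sg]) (use b in auto)
      have "norm (Bn n (G y)) \<le> (\<Sum>m. norm (Bn (n + m) y))"
        unfolding e by (rule summable_norm[OF sn])
      also have "\<dots> \<le> (\<Sum>m. C * r^n * r^m)"
        by (rule suminf_le[OF b sn sg])
      also have "\<dots> = C * r^n * (1 / (1 - r))"
        using suminf_mult[OF summable_geometric[of r], of "C * r^n"] suminf_geometric[of r] r0 r1 by simp
      finally show "norm (Bn n (G y)) \<le> C / (1 - r) * r^n" by simp
    qed
  qed
  have gb: "\<forall>n. norm (Bn n (g k)) \<le> K / (1 - r)^k * r^n" for k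
  proof (induction k)
    case 0 then show ?case using orb by (simp add: g_def Bn_def)
  next
    case (Suc k)
    have "0 \<le> K / (1 - r)^k" using K0 r1 by simp
    then have "\<forall>n. norm (Bn n (G (g k))) \<le> K / (1 - r)^k / (1 - r) * r^n"
      using step[of "g k" "K / (1 - r)^k"] Suc by blast
    then show ?case by (simp add: g_def mult.commute)
  qed
  have gsum: "summable (\<lambda>m. Bn m (g k))" for k
    using step[of "g k" "K / (1 - r)^k"] gb[of k] K0 r1 by simp
  have gstep: "g (Suc k) - B (g (Suc k)) = g k" for k
  proof -
    have e: "g (Suc k) = (\<Sum>m. Bn m (g k))" by (simp add: g_def G_def)
    have "B (g (Suc k)) = (\<Sum>m. B (Bn m (g k)))"
      unfolding e using bounded_linear.suminf[OF blinfun.bounded_linear_right[of B] gsum[of k]] by simp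
    also have "\<dots> = (\<Sum>m. Bn (Suc m) (g k))" by (simp add: Bn_def)
    also have "\<dots> = g (Suc k) - Bn 0 (g k)" unfolding e by (rule suminf_split_head[OF gsum])
    finally show ?thesis by (simp add: Bn_def)
  qed
  define Pn where "Pn n = (blinfun_apply P ^^ n)" for n
  have Pn_lin: "bounded_linear (Pn n)" for n unfolding Pn_def by (rule bl_funpow)
  have PnB: "Pn k (y - B y) = Pn k y - B (Pn k y)" for k y
  proof (induction k arbitrary: y)
    case 0 then show ?case by (simp add: Pn_def)
  next
    case (Suc k)
    have "Pn (Suc k) (y - B y) = P (Pn k y - B (Pn k y))" using Suc by (simp add: Pn_def)
    also have "\<dots> = P (Pn k y) - B (P (Pn k y))" by (simp add: blinfun.diff_right PB)
    finally show ?case by (simp add: Pn_def)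
  qed
  define v where "v k = Pn (Suc k) (g (Suc k))" for k
  have vA: "scaleC l (v k) - T (v k) = Pn k (g k)" for k
  proof -
    have "v k = P (Pn k (g (Suc k)))" by (simp add: v_def Pn_def)
    then have "scaleC l (v k) - T (v k) = Pn k (g (Suc k)) - B (Pn k (g (Suc k)))" by (simp add: AP)
    also have "\<dots> = Pn k (g k)" by (simp add: PnB[symmetric] gstep)
    finally show ?thesis .
  qed
  define Q where "Q = (norm P + 1) / (1 - r)"
  have Q0: "Q > 0" unfolding Q_def
    using r1 norm_ge_zero[of P] by (intro divide_pos_pos) linarith+
  have vb: "norm (v k) \<le> (K * Q) * Q^k" for k
  proof -
    have g0: "norm (g (Suc k)) \<le> K / (1 - r)^(Suc k)" using spec[OF gb[of "Suc k"], of 0] by (simp add: Bn_def)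
    have "norm (v k) \<le> norm P ^ Suc k * norm (g (Suc k))" unfolding v_def Pn_def by (rule norm_funpow)
    also have "\<dots> \<le> (norm P + 1) ^ Suc k * (K / (1 - r)^(Suc k))"
      by (intro mult_mono power_mono g0) auto
    also have "\<dots> = K * Q ^ Suc k" by (simp add: Q_def power_divide)
    finally show ?thesis by (simp add: mult.assoc)
  qed
  define a where "a k = scaleC ((-1)^k) (v k)" for k
  have ab: "norm (a k) \<le> (K * Q) * Q^k" for k
    using vb[of k] by (simp add: a_def norm_scaleC norm_power)
  define u where "u z = (\<Sum>k. scaleC ((z - l)^k) (a k))" for z
  have holo: "c_holomorphic_on u (ball l (1/Q))"
    unfolding u_def by (rule powser_holo[OF ab Q0])
  define Aop where "Aop y = scaleC l y - T y" for y
  have Aop_lin: "bounded_linear Aop"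
    unfolding Aop_def by (intro bounded_linear_sub bounded_linear_scaleC_right blinfun.bounded_linear_right)
  have AopC: "Aop (scaleC c y) = scaleC c (Aop y)" for c y
    using cT unfolding Aop_def complex_bounded_op_def
    by (simp add: scaleC_scaleC scaleC_diff_right mult.commute)
  have ident: "scaleC z (u z) - T (u z) = x" if z: "z \<in> ball l (1/Q)" for z
  proof -
    define c where "c = z - l"
    have cQ: "cmod c * Q < 1" using z Q0 by (simp add: c_def dist_norm norm_minus_commute field_simps)
    define w where "w k = scaleC (c^k) (a k)" for k
    have w_eq: "w k = scaleC ((-c)^k) (v k)" for k
      by (simp add: w_def a_def scaleC_scaleC power_mult_distrib[symmetric])
    have sw: "summable w"
    proof (rule summable_comparison_test[where g="\<lambda>k. (K * Q) * (cmod c * Q)^k"])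
      show "\<exists>N. \<forall>n\<ge>N. norm (w n) \<le> K * Q * (cmod c * Q) ^ n"
      proof (intro exI[of _ 0] allI impI)
        fix n :: nat
        have "norm (w n) = cmod c ^ n * norm (a n)" by (simp add: w_def norm_scaleC norm_power)
        also have "\<dots> \<le> cmod c ^ n * ((K * Q) * Q^n)" by (intro mult_left_mono ab) auto
        finally show "norm (w n) \<le> K * Q * (cmod c * Q) ^ n" by (simp add: power_mult_distrib mult_ac)
      qed
      show "summable (\<lambda>k. K * Q * (cmod c * Q) ^ k)"
        using cQ Q0 by (intro summable_mult summable_geometric) auto
    qed
    have uz: "u z = suminf w" by (simp add: u_def w_def[abs_def] c_def)
    define h where "h k = scaleC ((-c)^k) (Pn k (g k))" for k
    have Aw: "Aop (w k) = h k" for k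
      by (simp add: w_eq AopC h_def vA[folded Aop_def])
    have sh: "summable h"
      using bounded_linear.summable[OF Aop_lin sw] by (simp add: Aw)
    have cw: "scaleC c (w k) = - h (Suc k)" for k
      by (simp add: w_eq h_def v_def scaleC_scaleC scaleC_minus_left[symmetric])
    have "Aop (u z) = suminf h"
      using bounded_linear.suminf[OF Aop_lin sw] by (simp add: uz Aw)
    moreover have "scaleC c (u z) = - (\<Sum>k. h (Suc k))"
      using scaleC_suminf_right[OF sw, of c] suminf_minus[OF summable_ignore_initial_segment[OF sh, of 1]]
      by (simp add: uz cw)
    moreover have "h 0 = x" by (simp add: h_def Pn_def g_def scaleC_one)
    moreover have "scaleC z (u z) - T (u z) = Aop (u z) + scaleC c (u z)"
      by (simp add: Aop_def c_def scaleC_add_left[symmetric])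
    ultimately show ?thesis using suminf_split_head[OF sh] by simp
  qed
  show ?thesis
    unfolding local_resolvent_def
    using holo ident Q0 by (intro CollectI exI[of _ "ball l (1/Q)"] exI[of _ u]) auto
qed

definition piop :: "'a::complex_banach op \<Rightarrow> ('a \<Rightarrow>\<^sub>L 'a)" where "piop X = fst (opr X)"

lemma pi_mult: "piop (X * Y) = piop X o\<^sub>L piop Y" unfolding piop_def by transfer simp
lemma pi_one: "piop 1 = id_blinfun" unfolding piop_def by transfer simp
lemma pi_add: "piop (X + Y) = piop X + piop Y" unfolding piop_def by transfer simp
lemma pi_diff: "piop (X - Y) = piop X - piop Y" unfolding piop_def by transfer simp
lemma pi_scaleR: "piop (r *\<^sub>R X) = r *\<^sub>R piop X" unfolding piop_def by transfer simp

lemma bounded_linear_pi: "bounded_linear piop"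
proof (rule bounded_linear_intro[where K=1])
  show "piop (x + y) = piop x + piop y" for x y by (rule pi_add)
  show "piop (r *\<^sub>R x) = r *\<^sub>R piop x" for r x by (rule pi_scaleR)
  show "norm (piop x) \<le> norm x * 1" for x by (simp add: piop_def norm_op_eq)
qed

lemma pi_power_apply: "blinfun_apply (piop (X ^ n)) y = (blinfun_apply (piop X) ^^ n) y"
  by (induction n arbitrary: y) (simp_all add: pi_one pi_mult)

lemma exp_apply:
  "blinfun_apply (piop (exp X)) y = (\<Sum>n. (1 / fact n) *\<^sub>R (blinfun_apply (piop X) ^^ n) y)"
proof -
  have s: "summable (\<lambda>n. X^n /\<^sub>R fact n)" by (rule summable_exp_generic)
  have s2: "summable (\<lambda>n. piop (X^n /\<^sub>R fact n))" by (rule bounded_linear.summable[OF bounded_linear_pi s])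
  have "piop (exp X) = (\<Sum>n. piop (X^n /\<^sub>R fact n))"
    unfolding exp_def using bounded_linear.suminf[OF bounded_linear_pi s] by simp
  then have "blinfun_apply (piop (exp X)) y = (\<Sum>n. blinfun_apply (piop (X^n /\<^sub>R fact n)) y)"
    using bounded_linear.suminf[OF blinfun.bounded_linear_left[of y] s2] by simp
  also have "\<dots> = (\<Sum>n. (1 / fact n) *\<^sub>R (blinfun_apply (piop X) ^^ n) y)"
    by (simp add: pi_scaleR blinfun.scaleR_left pi_power_apply divide_inverse)
  finally show ?thesis .
qed

definition Tb :: "('a::complex_banach \<Rightarrow>\<^sub>L 'a) \<Rightarrow> 'a op" where "Tb T = Opr (T, 0)"
definition Sop :: "complex \<Rightarrow> 'a::complex_banach op" where "Sop c = Opr (Blinfun (scaleC c), 0)"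

lemma pi_Tb: "piop (Tb T) = T" by (simp add: piop_def Tb_def Opr_inverse)
lemma pi_Sop_apply: "blinfun_apply (piop (Sop c)) y = scaleC c y"
  by (simp add: piop_def Sop_def Opr_inverse bounded_linear_Blinfun_apply[OF bounded_linear_scaleC_right])

lemma op_exp_apply_eq: "op_exp_apply t T x = blinfun_apply (piop (exp (t *\<^sub>R Tb T))) x"
proof -
  have p: "(blinfun_apply (piop (t *\<^sub>R Tb T)) ^^ n) y = t^n *\<^sub>R (blinfun_apply T ^^ n) y" for n y
    by (induction n) (simp_all add: pi_scaleR pi_Tb blinfun.scaleR_left blinfun.scaleR_right)
  show ?thesis
    unfolding exp_apply op_exp_apply_def p by (simp add: divide_inverse mult.commute)
qed

lemma exp_Sop_apply: "blinfun_apply (piop (exp (Sop c))) y = scaleC (exp c) (y::'a::complex_banach)"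
proof -
  have p: "(blinfun_apply (piop (Sop c :: 'a op)) ^^ n) y = scaleC (c^n) y" for n y
    by (induction n) (simp_all add: pi_Sop_apply scaleC_one scaleC_scaleC)
  have s: "summable (\<lambda>n. c^n /\<^sub>R fact n)" by (rule summable_exp_generic)
  have "scaleC (exp c) y = (\<Sum>n. scaleC (c^n /\<^sub>R fact n) y)"
    unfolding exp_def by (rule scaleC_suminf_left[OF s])
  also have "\<dots> = (\<Sum>n. (1 / fact n) *\<^sub>R scaleC (c^n) y)"
    by (simp add: scaleC_scaleR_left divide_inverse)
  finally show ?thesis unfolding exp_apply p by simp
qed

lemma opr_mult: "opr (X * Y) = (fst (opr X) o\<^sub>L fst (opr Y), snd (opr X) * snd (opr Y))"
  by transfer simp

lemma Sop_Tb_commute: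
  assumes "complex_bounded_op T"
  shows "Sop c * Tb T = Tb T * Sop c"
proof -
  have b: "bounded_linear (scaleC c :: 'a \<Rightarrow> 'a)" by (rule bounded_linear_scaleC_right)
  have "opr (Sop c * Tb T) = opr (Tb T * Sop c)"
    unfolding opr_mult using assms
    by (auto simp: Sop_def Tb_def Opr_inverse complex_bounded_op_def bounded_linear_Blinfun_apply[OF b]
             intro!: blinfun_eqI)
  then show ?thesis using opr_inject by blast
qed

lemma scaleR_Sop: "s *\<^sub>R Sop l = (Sop (of_real s * l) :: 'a::complex_banach op)"
proof -
  have b: "bounded_linear (scaleC c :: 'a \<Rightarrow> 'a)" for c by (rule bounded_linear_scaleC_right)
  have "opr (s *\<^sub>R Sop l :: 'a op) = opr (Sop (of_real s * l))"
    by (auto simp add: Sop_def scaleR_op.rep_eq Opr_inverse bounded_linear_Blinfun_apply[OF b]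
          scaleC_scaleC[symmetric] scaleC_of_real blinfun.scaleR_left intro!: blinfun_eqI)
  then show ?thesis using opr_inject by blast
qed

lemma exp_nat_mult_alg: "exp (of_nat n * x) = exp x ^ n"
  for x :: "'b::{real_normed_algebra_1,banach}"
proof (induction n)
  case 0 then show ?case by simp
next
  case (Suc n)
  have c: "x * (of_nat n * x) = (of_nat n * x) * x"
    by (simp add: mult_of_nat_commute mult.assoc)
  have "exp (of_nat (Suc n) * x) = exp (x + of_nat n * x)" by (simp add: distrib_right)
  also have "\<dots> = exp x * exp (of_nat n * x)" by (rule exp_add_commuting[OF c])
  finally show ?case using Suc by simp
qed

definition phi :: "'b::{real_normed_algebra_1,banach} \<Rightarrow> 'b" where
  "phi X = (\<Sum>n. X^n /\<^sub>R fact (Suc n))"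

lemma summable_phi: "summable (\<lambda>n. (X::'b::{real_normed_algebra_1,banach})^n /\<^sub>R fact (Suc n))"
proof (rule summable_comparison_test[OF _ summable_norm_exp[of X]])
  show "\<exists>N. \<forall>n\<ge>N. norm (X^n /\<^sub>R fact (Suc n)) \<le> norm (X^n /\<^sub>R fact n)"
  proof (intro exI[of _ 0] allI impI)
    fix n :: nat
    have "fact n \<le> (fact (Suc n) :: real)" by (rule fact_mono) simp
    then have "norm (X^n) / fact (Suc n) \<le> norm (X^n) / fact n"
      by (intro divide_left_mono) auto
    then show "norm (X^n /\<^sub>R fact (Suc n)) \<le> norm (X^n /\<^sub>R fact n)"
      by (simp add: divide_inverse mult.commute)
  qed
qed

lemma exp_minus_one: "X * phi X = exp X - 1"
proof -
  have "(\<lambda>n. X^n /\<^sub>R fact n) sums exp X" unfolding exp_def by (rule summable_sums[OF summable_exp_generic])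
  then have "(\<lambda>n. X^(Suc n) /\<^sub>R fact (Suc n)) sums (exp X - 1)"
    using sums_Suc_iff[of "\<lambda>n. X^n /\<^sub>R fact n" "exp X - 1"] by simp
  moreover have "(\<lambda>n. X^(Suc n) /\<^sub>R fact (Suc n)) = (\<lambda>n. X * (X^n /\<^sub>R fact (Suc n)))"
    by (simp add: mult_scaleR_right)
  moreover have "(\<lambda>n. X * (X^n /\<^sub>R fact (Suc n))) sums (X * phi X)"
    unfolding phi_def by (rule sums_mult[OF summable_sums[OF summable_phi]])
  ultimately show ?thesis using sums_unique2 by metis
qed

lemma phi_commute:
  assumes "Z * X = X * Z"
  shows "Z * phi X = phi X * Z"
proof -
  have c: "Z * (X^n /\<^sub>R fact (Suc n)) = (X^n /\<^sub>R fact (Suc n)) * Z" for n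
    using power_commuting_commutes[OF assms[symmetric], of n]
    by (simp add: mult_scaleR_left mult_scaleR_right)
  have "Z * phi X = (\<Sum>n. Z * (X^n /\<^sub>R fact (Suc n)))"
    unfolding phi_def by (rule suminf_mult[OF summable_phi, symmetric])
  also have "\<dots> = (\<Sum>n. (X^n /\<^sub>R fact (Suc n)) * Z)" by (simp only: c)
  also have "\<dots> = phi X * Z"
    unfolding phi_def by (rule suminf_mult2[OF summable_phi, symmetric])
  finally show ?thesis .
qed

lemma int_ln_bound:
  fixes e b :: real assumes e: "e > 0" and b: "1 \<le> b"
  shows "((\<lambda>t. e / (2*t)) has_integral (e/2 * ln b)) {1..b}"
proof -
  have "((\<lambda>t. e / (2*t)) has_integral (e/2 * ln b - e/2 * ln 1)) {1..b}"
  proof (rule fundamental_theorem_of_calculus[OF b])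
    fix x assume x: "x \<in> {1..b}"
    then have "x > 0" by simp
    have "((\<lambda>t. e/2 * ln t) has_real_derivative (e/2 * inverse x)) (at x within {1..b})"
      by (intro DERIV_cmult DERIV_ln[THEN has_field_derivative_at_within] \<open>x > 0\<close>)
    then show "((\<lambda>t. e/2 * ln t) has_vector_derivative e / (2*x)) (at x within {1..b})"
      by (simp add: has_real_derivative_iff_has_vector_derivative[symmetric] field_simps)
  qed
  then show ?thesis by simp
qed

lemma growth:
  fixes w :: "real \<Rightarrow> real"
  assumes cont: "continuous_on UNIV w" and ge1: "\<And>t. 1 \<le> w t"
    and sub: "\<And>t s. w (t + s) \<le> w t * w s"
    and intb: "\<And>b. 1 \<le> b \<Longrightarrow> (\<lambda>t. ln (w t) / (1 + t\<^sup>2)) integrable_on {1..b}"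
    and intI: "\<And>b. 1 \<le> b \<Longrightarrow> integral {1..b} (\<lambda>t. ln (w t) / (1 + t\<^sup>2)) \<le> I"
    and e: "e > 0"
  shows "\<exists>M. \<forall>t\<ge>0. w t \<le> M * exp (e * t)"
proof -
  have "\<exists>s>0. ln (w s) < e * s"
  proof (rule ccontr)
    assume "\<not> ?thesis"
    then have lg: "\<And>s. s > 0 \<Longrightarrow> e * s \<le> ln (w s)" by force
    define b where "b = exp (2 * (\<bar>I\<bar> + 1) / e)"
    have b1: "1 \<le> b" unfolding b_def using e by simp
    have lnb: "e/2 * ln b = \<bar>I\<bar> + 1" unfolding b_def using e by simp
    have hint: "((\<lambda>t. e / (2*t)) has_integral (e/2 * ln b)) {1..b}" by (rule int_ln_bound[OF e b1])
    have "e/2 * ln b \<le> integral {1..b} (\<lambda>t. ln (w t) / (1 + t\<^sup>2))"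
    proof -
      have "integral {1..b} (\<lambda>t. e / (2*t)) \<le> integral {1..b} (\<lambda>t. ln (w t) / (1 + t\<^sup>2))"
      proof (rule integral_le)
        show "(\<lambda>t. e / (2*t)) integrable_on {1..b}" using hint by blast
        show "(\<lambda>t. ln (w t) / (1 + t\<^sup>2)) integrable_on {1..b}" by (rule intb[OF b1])
        fix t assume t: "t \<in> {1..b}"
        then have t1: "1 \<le> t" by simp
        have "e / (2*t) \<le> e * t / (1 + t\<^sup>2)"
        proof -
          have tt: "1 \<le> t * t" using mult_mono[of 1 t 1 t] t1 by simp
          have A: "e * 1 \<le> e * (t * t)" using tt e by (intro mult_left_mono) auto
          have B: "e * (1 + t\<^sup>2) = e + e * (t * t)" by (simp add: power2_eq_square algebra_simps)
          have C: "e * t * (2 * t) = 2 * (e * (t * t))" by (simp add: algebra_simps)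
          have "e * (1 + t\<^sup>2) \<le> e * t * (2 * t)" using A B C by linarith
          moreover have "0 < 1 + t\<^sup>2" by (simp add: add_pos_nonneg)
          ultimately show ?thesis using t1 e by (simp add: field_simps)
        qed
        also have "\<dots> \<le> ln (w t) / (1 + t\<^sup>2)"
          using lg[of t] t1 by (intro divide_right_mono) auto
        finally show "e / (2*t) \<le> ln (w t) / (1 + t\<^sup>2)" .
      qed
      then show ?thesis using hint by (simp add: integral_unique)
    qed
    then show False using intI[OF b1] lnb by linarith
  qed
  then obtain s where s0: "s > 0" and ls: "ln (w s) < e * s" by blast
  have ws: "w s \<le> exp (e * s)"
  proof -
    have "w s = exp (ln (w s))" using ge1[of s] by simp
    also have "\<dots> \<le> exp (e * s)" using ls by simp
    finally show ?thesis .
  qed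
  have cs: "continuous_on {0..s} w" by (rule continuous_on_subset[OF cont]) simp
  have ne: "{0..s} \<noteq> {}" using s0 by simp
  obtain xm where xm: "\<And>y. y \<in> {0..s} \<Longrightarrow> w y \<le> w xm"
    using continuous_attains_sup[OF compact_Icc ne cs] by blast
  define M where "M = w xm"
  have pw: "w (r + real k * s) \<le> w r * w s ^ k" for r k
  proof (induction k)
    case 0 then show ?case by simp
  next
    case (Suc k)
    have "w (r + real (Suc k) * s) = w ((r + real k * s) + s)" by (simp add: algebra_simps)
    also have "\<dots> \<le> w (r + real k * s) * w s" by (rule sub)
    also have "\<dots> \<le> w r * w s ^ k * w s"
      using Suc ge1[of s] by (intro mult_right_mono) auto
    finally show ?case by (simp add: mult_ac)
  qed
  show ?thesis
  proof (intro exI[of _ M] allI impI)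
    fix t :: real assume t0: "0 \<le> t"
    define k where "k = nat \<lfloor>t / s\<rfloor>"
    have kr: "real k = of_int \<lfloor>t / s\<rfloor>" unfolding k_def using t0 s0 by simp
    have "real k \<le> t / s" using kr of_int_floor_le[of "t/s"] by simp
    then have k1: "real k * s \<le> t" using pos_le_divide_eq[OF s0] by blast
    have "t / s < real k + 1" using kr real_of_int_floor_add_one_gt[of "t/s"] by simp
    then have "t < (real k + 1) * s" using pos_divide_less_eq[OF s0] by blast
    then have k2: "t < real k * s + s" by (simp add: algebra_simps)
    define r where "r = t - real k * s"
    have r: "r \<in> {0..s}" using k1 k2 by (simp add: r_def)
    have "w t = w (r + real k * s)" by (simp add: r_def)
    also have "\<dots> \<le> w r * w s ^ k" by (rule pw)
    also have "\<dots> \<le> M * exp (e * s) ^ k"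
      using xm[OF r] ws ge1[of s] ge1[of r] by (intro mult_mono power_mono) (auto simp: M_def)
    also have "\<dots> = M * exp (real k * (e * s))" by (simp only: exp_of_nat_mult)
    also have "\<dots> = M * exp (e * (real k * s))" by (simp add: mult_ac)
    also have "\<dots> \<le> M * exp (e * t)"
      using k1 e ge1[of xm] by (intro mult_left_mono) (auto simp: M_def)
    finally show "w t \<le> M * exp (e * t)" .
  qed
qed

lemma weight_bounds:
  assumes "regular_weight \<omega>" "e > 0"
  shows "\<exists>M. \<forall>t\<ge>0. \<omega> t \<le> M * exp (e * t)"
    and "\<exists>M. \<forall>t\<ge>0. \<omega> (-t) \<le> M * exp (e * t)"
proof -
  define F where "F t = ln (\<omega> t) / (1 + t\<^sup>2)" for t
  have w: "continuous_on UNIV \<omega>" "\<And>t. 1 \<le> \<omega> t" "\<And>t s. \<omega> (t + s) \<le> \<omega> t * \<omega> s"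
    using assms(1) by (auto simp: regular_weight_def weight_def)
  have Fint: "F integrable_on UNIV" using assms(1) by (simp add: regular_weight_def F_def[abs_def])
  have F0: "0 \<le> F t" for t using w(2)[of t] by (simp add: F_def)
  have Fi: "F integrable_on {a..b}" for a b by (rule integrable_on_subinterval[OF Fint]) auto
  have FI: "integral {a..b} F \<le> integral UNIV F" for a b
    by (rule integral_subset_le) (use Fi Fint F0 in auto)
  show "\<exists>M. \<forall>t\<ge>0. \<omega> t \<le> M * exp (e * t)"
    by (rule growth[OF w, where I="integral UNIV F"]) (use Fi FI assms(2) in \<open>auto simp: F_def[abs_def]\<close>)
  have c2: "continuous_on UNIV (\<lambda>t. \<omega> (-t))"
    by (rule continuous_on_compose2[OF w(1)]) (auto intro: continuous_intros)
  have s2: "\<omega> (-(t + s)) \<le> \<omega> (-t) * \<omega> (-s)" for t s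
    using w(3)[of "-t" "-s"] by simp
  have Fr: "(\<lambda>t. ln (\<omega> (-t)) / (1 + t\<^sup>2)) = (\<lambda>t. F (-t))" by (simp add: F_def[abs_def])
  have i2: "(\<lambda>t. F (-t)) integrable_on {1..b}" for b
    using Henstock_Kurzweil_Integration.integrable_reflect_real[where f=F and a="-b" and b="-1"] Fi[of "-b" "-1"] by simp
  have I2: "integral {1..b} (\<lambda>t. F (-t)) \<le> integral UNIV F" for b
    using Henstock_Kurzweil_Integration.integral_reflect_real[where f=F and a="-b" and b="-1"] FI[of "-b" "-1"] by simp
  show "\<exists>M. \<forall>t\<ge>0. \<omega> (-t) \<le> M * exp (e * t)"
    by (rule growth[OF c2, where I="integral UNIV F"]) (use w(2) s2 i2 I2 assms(2) Fr in auto)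
qed

lemma exp_sA_apply:
  assumes cT: "complex_bounded_op T"
  shows "blinfun_apply (piop (exp (s *\<^sub>R (Sop l - Tb T)))) x
         = scaleC (exp (of_real s * l)) (op_exp_apply (-s) T (x::'a::complex_banach))"
proof -
  have e: "s *\<^sub>R (Sop l - Tb T) = Sop (of_real s * l) + (-s) *\<^sub>R Tb T"
    by (simp add: scaleR_diff_right scaleR_Sop)
  have c: "Sop (of_real s * l) * ((-s) *\<^sub>R Tb T) = ((-s) *\<^sub>R Tb T) * (Sop (of_real s * l) :: 'a op)"
    using Sop_Tb_commute[OF cT, of "of_real s * l"] by (simp add: mult_scaleR_left mult_scaleR_right)
  have "exp (s *\<^sub>R (Sop l - Tb T)) = exp (Sop (of_real s * l)) * exp ((-s) *\<^sub>R Tb T)"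
    unfolding e by (rule exp_add_commuting[OF c])
  then show ?thesis
    by (simp add: pi_mult exp_Sop_apply op_exp_apply_eq)
qed

lemma resolvent_point:
  fixes T :: "'a::complex_banach \<Rightarrow>\<^sub>L 'a" and \<sigma> :: real
  assumes cT: "complex_bounded_op T"
    and sg: "\<sigma> * \<sigma> = 1" and neg: "\<sigma> * Re l < 0"
    and C0: "C > 0" and bnd: "\<And>t. norm (op_exp_apply t T x) \<le> C * \<omega> t"
    and wb: "\<And>n::nat. \<omega> (-(real n * \<sigma>)) \<le> M * exp ((- \<sigma> * Re l / 2) * real n)"
  shows "l \<in> local_resolvent T x"
proof -
  define A :: "'a op" where "A = Sop l - Tb T"
  define Bop where "Bop = exp (\<sigma> *\<^sub>R A)"
  define Pop where "Pop = (-\<sigma>) *\<^sub>R phi (\<sigma> *\<^sub>R A)"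
  have k0: "(\<sigma> *\<^sub>R A) * phi (\<sigma> *\<^sub>R A) = Bop - 1" unfolding Bop_def by (rule exp_minus_one)
  have "A * Pop = (-\<sigma>) *\<^sub>R (A * phi (\<sigma> *\<^sub>R A))" by (simp add: Pop_def mult_scaleR_right)
  also have "\<dots> = (-\<sigma>) *\<^sub>R (\<sigma> *\<^sub>R (\<sigma> *\<^sub>R (A * phi (\<sigma> *\<^sub>R A))))" by (simp add: sg)
  also have "\<dots> = (-\<sigma>) *\<^sub>R (\<sigma> *\<^sub>R (Bop - 1))" using k0 by (simp add: mult_scaleR_left)
  also have "\<dots> = 1 - Bop" by (simp add: sg)
  finally have key1: "A * Pop = 1 - Bop" .
  have "exp (\<sigma> *\<^sub>R A) * phi (\<sigma> *\<^sub>R A) = phi (\<sigma> *\<^sub>R A) * exp (\<sigma> *\<^sub>R A)"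
    by (rule phi_commute[OF exp_times_arg_commute])
  then have key2: "Pop * Bop = Bop * Pop"
    by (simp add: Pop_def Bop_def mult_scaleR_left mult_scaleR_right)
  define B where "B = piop Bop"
  define P where "P = piop Pop"
  have AP: "scaleC l (P y) - T (P y) = y - B y" for y
  proof -
    have "blinfun_apply (piop (A * Pop)) y = blinfun_apply (piop (1 - Bop)) y" by (simp only: key1)
    then show ?thesis
      by (simp add: A_def pi_mult pi_diff pi_one blinfun.diff_left pi_Sop_apply pi_Tb P_def B_def)
  qed
  have PB: "P (B y) = B (P y)" for y
  proof -
    have "blinfun_apply (piop (Pop * Bop)) y = blinfun_apply (piop (Bop * Pop)) y" by (simp only: key2)
    then show ?thesis by (simp add: pi_mult P_def B_def)
  qed
  define r where "r = exp (\<sigma> * Re l / 2)"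
  have r0: "0 \<le> r" and r1: "r < 1" using neg by (auto simp: r_def)
  have orb: "norm ((blinfun_apply B ^^ n) x) \<le> (C * M) * r^n" for n
  proof -
    have "(blinfun_apply B ^^ n) x = blinfun_apply (piop (Bop ^ n)) x"
      by (simp add: B_def pi_power_apply)
    also have "Bop ^ n = exp ((real n * \<sigma>) *\<^sub>R A)"
    proof -
      have "Bop ^ n = exp (of_nat n * (\<sigma> *\<^sub>R A))" unfolding Bop_def by (rule exp_nat_mult_alg[symmetric])
      also have "of_nat n * (\<sigma> *\<^sub>R A) = (real n * \<sigma>) *\<^sub>R A" by (simp add: scaleR_conv_of_real mult.assoc)
      finally show ?thesis .
    qed
    finally have e: "(blinfun_apply B ^^ n) x
        = scaleC (exp (of_real (real n * \<sigma>) * l)) (op_exp_apply (-(real n * \<sigma>)) T x)"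
      using exp_sA_apply[OF cT, of "real n * \<sigma>" l x] by (simp add: A_def)
    have "norm ((blinfun_apply B ^^ n) x)
        = exp (real n * \<sigma> * Re l) * norm (op_exp_apply (-(real n * \<sigma>)) T x)"
      unfolding e by (simp add: norm_scaleC)
    also have "\<dots> \<le> exp (real n * \<sigma> * Re l) * (C * (M * exp ((- \<sigma> * Re l / 2) * real n)))"
    proof (rule mult_left_mono)
      show "norm (op_exp_apply (-(real n * \<sigma>)) T x) \<le> C * (M * exp ((- \<sigma> * Re l / 2) * real n))"
        by (rule order_trans[OF bnd mult_left_mono[OF wb]]) (use C0 in simp)
    qed simp
    also have "\<dots> = (C * M) * (exp (real n * \<sigma> * Re l) * exp ((- \<sigma> * Re l / 2) * real n))"
      by (simp add: mult_ac)
    also have "exp (real n * \<sigma> * Re l) * exp ((- \<sigma> * Re l / 2) * real n) = r^n"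
    proof -
      have "exp (real n * \<sigma> * Re l) * exp ((- \<sigma> * Re l / 2) * real n)
          = exp (real n * \<sigma> * Re l + (- \<sigma> * Re l / 2) * real n)" by (rule exp_add[symmetric])
      also have "\<dots> = exp (real n * (\<sigma> * Re l / 2))" by (rule arg_cong[where f=exp]) (simp add: field_simps)
      also have "\<dots> = r^n" unfolding r_def by (rule exp_of_nat_mult)
      finally show ?thesis .
    qed
    finally show ?thesis .
  qed
  show ?thesis by (rule core_resolvent[OF cT AP PB orb r0 r1])
qed

theorem proposition2p2:
  fixes \<omega> :: "real \<Rightarrow> real" and T :: "'a::complex_banach \<Rightarrow>\<^sub>L 'a" and x :: 'a
  assumes "regular_weight \<omega>"
    and "complex_bounded_op T"
    and "\<exists>C>0. \<forall>t. norm (op_exp_apply t T x) \<le> C * \<omega> t"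
  shows "local_spectrum T x \<subseteq> {z. Re z = 0}"
proof
  fix z assume zs: "z \<in> local_spectrum T x"
  obtain C where C0: "C > 0" and bnd: "\<And>t. norm (op_exp_apply t T x) \<le> C * \<omega> t" using assms(3) by blast
  have "z \<in> local_resolvent T x" if nz: "Re z \<noteq> 0"
  proof (cases "Re z > 0")
    case True
    obtain M where M: "\<forall>t\<ge>0. \<omega> t \<le> M * exp (Re z / 2 * t)"
      using weight_bounds(1)[OF assms(1), of "Re z / 2"] True by auto
    show ?thesis
    proof (rule resolvent_point[OF assms(2), where \<sigma>="-1" and l=z and C=C and \<omega>=\<omega> and M=M])
      show "\<omega> (-(real n * -1)) \<le> M * exp ((- (-1) * Re z / 2) * real n)" for n :: nat
        using M[rule_format, of "real n"] by (simp add: mult.commute)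
    qed (use True C0 bnd in auto)
  next
    case False
    with nz have neg: "Re z < 0" by simp
    obtain M where M: "\<forall>t\<ge>0. \<omega> (-t) \<le> M * exp (- Re z / 2 * t)"
      using weight_bounds(2)[OF assms(1), of "- Re z / 2"] neg by auto
    show ?thesis
    proof (rule resolvent_point[OF assms(2), where \<sigma>=1 and l=z and C=C and \<omega>=\<omega> and M=M])
      show "\<omega> (-(real n * 1)) \<le> M * exp ((- 1 * Re z / 2) * real n)" for n :: nat
        using M[rule_format, of "real n"] by (simp add: mult.commute)
    qed (use neg C0 bnd in auto)
  qed
  then show "z \<in> {z. Re z = 0}" using zs by (auto simp: local_spectrum_def)
qed

end
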